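(* Let $C$ be a set of concepts over $\{0,1\}^n$, let $S\subseteq\{0,1\}^n$ with $|S|=d$ be a set shattered by $C$. Let $\mathcal{N}$ be a quantum network with quantum membership oracle gates such that for every $c\in C$, if the oracle gates of $\mathcal{N}$ are $QMQ_c$ gates, then with probability at least $2/3$ the output of $\mathcal{N}$ is a representation of a Boolean circuit $h$ whose relative distance from $c$ on $S$ is at most $1/10$. Then the query complexity of $\mathcal{N}$ is at least $\frac{d}{12n}$.
   Context: A set $S\subseteq\{0,1\}^n$ is shattered by $C$ if for every $U\subseteq S$ there is $c\in C$ with $\{x\in S: c(x)=1\}=U$. The relative distance of Boolean functions $h$ and $c$ on $S$ is the fraction of points of $S$ on which they disagree. A quantum network on an $m$-qubit register is a sequence $U_0,O_1,U_1,\dots,O_T,U_T$ of unitaries applied to $|0^m\rangle$, the $U_i$ arbitrary fixed unitaries and each $O_i$ an oracle gate, followed by a computational-basis measurement of some qubits whose outcome is the output; $T$ is the query complexity. The gate $QMQ_c$ maps basis state $|x,b,y\rangle$ ($x\in\{0,1\}^n$, $b\in\{0,1\}$) to $|x,b\oplus c(x),y\rangle$. *)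

theory Defs
  imports Complex_Main "Jordan_Normal_Form.Matrix"
begin

text \<open>Points of the cube are bool lists of length n; concepts are Boolean functions on them.\<close>

definition shattered :: "(bool list \<Rightarrow> bool) set \<Rightarrow> bool list set \<Rightarrow> bool" where
  "shattered C S \<longleftrightarrow> (\<forall>U\<subseteq>S. \<exists>c\<in>C. {x\<in>S. c x} = U)"

definition rel_dist :: "bool list set \<Rightarrow> (bool list \<Rightarrow> bool) \<Rightarrow> (bool list \<Rightarrow> bool) \<Rightarrow> real" where
  "rel_dist S h c = real (card {x\<in>S. h x \<noteq> c x}) / real (card S)"

text \<open>Register of m qubits: computational basis state with index i < 2^m;
  qubit k of basis state i is bit k of i.\<close>

definition qubit :: "nat \<Rightarrow> nat \<Rightarrow> bool" where
  "qubit i k = odd (i div 2 ^ k)"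

definition basis_bits :: "nat \<Rightarrow> nat \<Rightarrow> bool list" where
  "basis_bits m i = map (qubit i) [0..<m]"

definition cadjoint :: "complex mat \<Rightarrow> complex mat" where
  "cadjoint U = mat (dim_col U) (dim_row U) (\<lambda>(i,j). cnj (U $$ (j,i)))"

definition unitary_on :: "nat \<Rightarrow> complex mat \<Rightarrow> bool" where
  "unitary_on m U \<longleftrightarrow> U \<in> carrier_mat (2^m) (2^m) \<and> cadjoint U * U = 1\<^sub>m (2^m)
      \<and> U * cadjoint U = 1\<^sub>m (2^m)"

text \<open>QMQ_c on an m-qubit register: |x,b,y> \<mapsto> |x, b xor c(x), y>, where x are
  qubits 0..n-1, b is qubit n and y are the remaining qubits.\<close>

definition qmq_target :: "nat \<Rightarrow> nat \<Rightarrow> (bool list \<Rightarrow> bool) \<Rightarrow> nat \<Rightarrow> nat" where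
  "qmq_target m n c j =
     (let bs = basis_bits m j in
      if c (take n bs) then (if qubit j n then j - 2 ^ n else j + 2 ^ n) else j)"

definition QMQ :: "nat \<Rightarrow> nat \<Rightarrow> (bool list \<Rightarrow> bool) \<Rightarrow> complex mat" where
  "QMQ m n c = mat (2^m) (2^m) (\<lambda>(i,j). if i = qmq_target m n c j then 1 else 0)"

text \<open>A quantum network U_0, O_1, U_1, ..., O_T, U_T applied to |0^m>,
  given as U_0 and the list [U_1,...,U_T]; Orc is the oracle gate.\<close>

definition net_state :: "nat \<Rightarrow> complex mat \<Rightarrow> complex mat list \<Rightarrow> complex mat \<Rightarrow> complex vec" where
  "net_state m U0 Us Orc = foldl (\<lambda>v U. U *\<^sub>v (Orc *\<^sub>v v)) (U0 *\<^sub>v unit_vec (2^m) 0) Us"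

definition out_prob :: "nat \<Rightarrow> nat list \<Rightarrow> complex vec \<Rightarrow> bool list \<Rightarrow> real" where
  "out_prob m ms v out = (\<Sum>i\<in>{i. i < 2^m \<and> map (qubit i) ms = out}. (cmod (v $ i))\<^sup>2)"

definition success_prob ::
  "nat \<Rightarrow> nat list \<Rightarrow> complex vec \<Rightarrow> (bool list \<Rightarrow> (bool list \<Rightarrow> bool) option)
     \<Rightarrow> bool list set \<Rightarrow> (bool list \<Rightarrow> bool) \<Rightarrow> real" where
  "success_prob m ms v decode S c =
     (\<Sum>out\<in>{out. length out = length ms \<and> (\<exists>h. decode out = Some h \<and> rel_dist S h c \<le> 1/10)}.
        out_prob m ms v out)"

end

theory Submission
  imports Defs
begin

definition flp :: "nat \<Rightarrow> nat \<Rightarrow> nat" where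
  "flp n i = (if qubit i n then i - 2^n else i + 2^n)"

definition xof :: "nat \<Rightarrow> nat \<Rightarrow> bool list" where
  "xof n i = map (qubit i) [0..<n]"

lemma qubit_add: "k < n \<Longrightarrow> qubit (i + 2^n) k = qubit i k"
proof -
  assume k: "k < n"
  have "(i + 2^n) div 2^k = i div 2^k + 2^(n-k)"
  proof -
    have "(2::nat)^n = 2^k * 2^(n-k)" using k by (simp flip: power_add)
    then show ?thesis by simp
  qed
  moreover have "even ((2::nat)^(n-k))" using k by simp
  ultimately show ?thesis unfolding qubit_def by simp
qed

lemma qubit_add_n: "qubit (i + 2^n) n = (\<not> qubit i n)"
  unfolding qubit_def by simp

lemma flp_lt: assumes "n < m" "i < 2^m" shows "flp n i < 2^m"
proof (cases "qubit i n")
  case True then show ?thesis using assms by (simp add: flp_def)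
next
  case False
  then have ev: "even (i div 2^n)" by (simp add: qubit_def)
  have "i div 2^n < 2^(m-n)"
    using assms by (simp add: div_less_iff_less_mult flip: power_add)
  moreover have "even ((2::nat)^(m-n))" using assms by simp
  moreover have "i div 2^n + 1 \<noteq> 2^(m-n)" using ev \<open>even ((2::nat)^(m-n))\<close> by (metis even_plus_one_iff)
  ultimately have "i div 2^n + 1 < 2^(m-n)" by linarith
  then have "(i + 2^n) div 2^n < 2^(m-n)" by simp
  then have "i + 2^n < 2^n * 2^(m-n)"
    by (metis div_less_iff_less_mult mult.commute zero_less_power zero_less_numeral)
  then show ?thesis using False assms by (simp add: flp_def flip: power_add)
qed

lemma qubit_set_sub: assumes "qubit i n" shows "i = (i - 2^n) + 2^n" "\<not> qubit (i - 2^n) n"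
proof -
  have "i div 2^n \<noteq> 0" using assms unfolding qubit_def by (metis odd_pos not_gr0)
  then have "2^n \<le> i" by (metis div_less not_le)
  then show 1: "i = (i - 2^n) + 2^n" by simp
  show "\<not> qubit (i - 2^n) n" using assms qubit_add_n[of "i - 2^n" n] 1 by metis
qed

lemma qubit_flp_low: "k < n \<Longrightarrow> qubit (flp n i) k = qubit i k"
proof (cases "qubit i n")
  case True
  assume k: "k < n"
  then show ?thesis using True qubit_set_sub[OF True] qubit_add[OF k, of "i - 2^n"]
    by (simp add: flp_def)
qed (simp add: flp_def qubit_add)

lemma xof_flp: "xof n (flp n i) = xof n i"
  by (simp add: xof_def qubit_flp_low)

lemma qubit_flp_n: "qubit (flp n i) n = (\<not> qubit i n)"
proof (cases "qubit i n")
  case True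
  then show ?thesis using qubit_set_sub[OF True] by (simp add: flp_def)
qed (simp add: flp_def qubit_add_n)

lemma flp_flp: "flp n (flp n i) = i"
proof (cases "qubit i n")
  case True
  then show ?thesis using qubit_set_sub[OF True] qubit_flp_n[of n i]
    by (simp add: flp_def)
next
  case False
  then show ?thesis using qubit_flp_n[of n i] by (simp add: flp_def)
qed

definition tgt :: "nat \<Rightarrow> (bool list \<Rightarrow> bool) \<Rightarrow> nat \<Rightarrow> nat" where
  "tgt n c i = (if c (xof n i) then flp n i else i)"

lemma qmq_target_eq: "n \<le> m \<Longrightarrow> qmq_target m n c j = tgt n c j"
  by (simp add: qmq_target_def tgt_def basis_bits_def xof_def flp_def take_map)

lemma tgt_tgt: "tgt n c (tgt n c i) = i"
  by (simp add: tgt_def xof_flp flp_flp)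

lemma tgt_lt: "n < m \<Longrightarrow> i < 2^m \<Longrightarrow> tgt n c i < 2^m"
  by (simp add: tgt_def flp_lt)

definition ip :: "nat \<Rightarrow> (nat \<Rightarrow> complex) \<Rightarrow> (nat \<Rightarrow> complex) \<Rightarrow> complex" where
  "ip N f g = (\<Sum>i<N. cnj (f i) * g i)"
definition nrm :: "nat \<Rightarrow> (nat \<Rightarrow> complex) \<Rightarrow> real" where
  "nrm N f = (\<Sum>i<N. (cmod (f i))^2)"
definition mapp :: "nat \<Rightarrow> complex mat \<Rightarrow> (nat \<Rightarrow> complex) \<Rightarrow> nat \<Rightarrow> complex" where
  "mapp N U f = (\<lambda>i. \<Sum>j<N. U $$ (i,j) * f j)"
definition vf :: "complex vec \<Rightarrow> nat \<Rightarrow> complex" where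
  "vf w = (\<lambda>i. w $ i)"
definition qapp :: "nat \<Rightarrow> (bool list \<Rightarrow> bool) \<Rightarrow> (nat \<Rightarrow> complex) \<Rightarrow> nat \<Rightarrow> complex" where
  "qapp n c f = (\<lambda>i. f (tgt n c i))"

lemma ip_self: "ip N f f = complex_of_real (nrm N f)"
  unfolding ip_def nrm_def of_real_sum
  by (intro sum.cong refl) (subst complex_norm_square, simp add: mult.commute)

lemma nrm_cong: "(\<And>i. i < N \<Longrightarrow> f i = g i) \<Longrightarrow> nrm N f = nrm N g"
  unfolding nrm_def by (intro sum.cong) auto

lemma mapp_cong: "(\<And>j. j < N \<Longrightarrow> f j = g j) \<Longrightarrow> mapp N U f = mapp N U g"
  unfolding mapp_def by (intro ext sum.cong) auto

lemma nrm_nonneg: "0 \<le> nrm N f"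
  unfolding nrm_def by (intro sum_nonneg) auto

lemma vf_mult: assumes "U \<in> carrier_mat N N" "w \<in> carrier_vec N" "i < N"
  shows "vf (U *\<^sub>v w) i = mapp N U (vf w) i"
  using assms by (auto simp: vf_def mapp_def scalar_prod_def atLeast0LessThan)

lemma adj_entries: assumes "U \<in> carrier_mat N N" "cadjoint U * U = 1\<^sub>m N" "j < N" "k < N"
  shows "(\<Sum>i<N. cnj (U$$(i,j)) * U$$(i,k)) = (if j = k then 1 else 0)"
proof -
  have "(cadjoint U * U) $$ (j,k) = (if j = k then 1 else 0)" using assms by simp
  moreover have "(cadjoint U * U) $$ (j,k) = (\<Sum>i<N. cnj (U$$(i,j)) * U$$(i,k))"
    using assms(1,3,4) by (auto simp: cadjoint_def scalar_prod_def atLeast0LessThan)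
  ultimately show ?thesis by simp
qed

lemma unitary_nrm: assumes "U \<in> carrier_mat N N" "cadjoint U * U = 1\<^sub>m N"
  shows "nrm N (mapp N U f) = nrm N f"
proof -
  have "ip N (mapp N U f) (mapp N U f) =
     (\<Sum>i<N. \<Sum>j<N. \<Sum>k<N. (cnj (U$$(i,j)) * U$$(i,k)) * (cnj (f j) * f k))"
    unfolding ip_def mapp_def cnj_sum sum_product
    by (intro sum.cong refl) (simp add: mult_ac)
  also have "\<dots> = (\<Sum>j<N. \<Sum>k<N. (\<Sum>i<N. cnj (U$$(i,j)) * U$$(i,k)) * (cnj (f j) * f k))"
  proof -
    have "(\<Sum>i<N. \<Sum>j<N. \<Sum>k<N. (cnj (U$$(i,j)) * U$$(i,k)) * (cnj (f j) * f k))
      = (\<Sum>j<N. \<Sum>i<N. \<Sum>k<N. (cnj (U$$(i,j)) * U$$(i,k)) * (cnj (f j) * f k))"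
      by (rule sum.swap)
    also have "\<dots> = (\<Sum>j<N. \<Sum>k<N. \<Sum>i<N. (cnj (U$$(i,j)) * U$$(i,k)) * (cnj (f j) * f k))"
      by (rule sum.cong[OF refl], rule sum.swap)
    finally show ?thesis by (simp add: sum_distrib_right)
  qed
  also have "\<dots> = (\<Sum>j<N. \<Sum>k<N. (if j = k then cnj (f j) * f k else 0))"
    by (intro sum.cong refl) (simp add: adj_entries[OF assms])
  also have "\<dots> = ip N f f" by (simp add: ip_def)
  finally show ?thesis unfolding ip_self by simp
qed

lemma QMQ_carrier: "QMQ m n c \<in> carrier_mat (2^m) (2^m)"
  by (simp add: QMQ_def)

lemma vf_qmq: assumes "n < m" "w \<in> carrier_vec (2^m)" "i < 2^m"
  shows "vf (QMQ m n c *\<^sub>v w) i = qapp n c (vf w) i"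
proof -
  have "(QMQ m n c *\<^sub>v w) $ i = (\<Sum>j\<in>{0..<2^m}. (if i = qmq_target m n c j then 1 else 0) * w $ j)"
    using assms by (simp add: QMQ_def scalar_prod_def)
  also have "\<dots> = (\<Sum>j\<in>{0..<2^m}. (if j = tgt n c i then w $ j else 0))"
  proof (intro sum.cong refl)
    fix j assume "j \<in> {0..<(2::nat)^m}"
    have "(i = tgt n c j) = (j = tgt n c i)" using tgt_tgt by metis
    then show "(if i = qmq_target m n c j then 1 else 0) * w $ j = (if j = tgt n c i then w $ j else 0)"
      using assms by (simp add: qmq_target_eq)
  qed
  also have "\<dots> = w $ tgt n c i" using tgt_lt[OF assms(1,3)] by simp
  finally show ?thesis by (simp add: vf_def qapp_def)
qed

lemma nrm_qapp: assumes "n < m" shows "nrm (2^m) (qapp n c f) = nrm (2^m) f"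
  unfolding nrm_def qapp_def
  by (rule sum.reindex_bij_witness[of _ "tgt n c" "tgt n c"]) (auto simp: tgt_tgt tgt_lt[OF assms])

definition spn :: "nat \<Rightarrow> (nat \<Rightarrow> complex) set \<Rightarrow> (nat \<Rightarrow> complex) set" where
  "spn N V = {f. \<exists>a. \<forall>i<N. f i = (\<Sum>v\<in>V. a v * v i)}"

definition orthon :: "nat \<Rightarrow> (nat \<Rightarrow> complex) set \<Rightarrow> bool" where
  "orthon N B \<longleftrightarrow> (\<forall>b\<in>B. \<forall>b'\<in>B. ip N b b' = (if b = b' then 1 else 0))"

lemma spn_cong: "f \<in> spn N V \<Longrightarrow> (\<And>i. i < N \<Longrightarrow> g i = f i) \<Longrightarrow> g \<in> spn N V"
  unfolding spn_def by auto

lemma spn_base: assumes "finite V" "v \<in> V" shows "v \<in> spn N V"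
  unfolding spn_def
proof (intro CollectI exI allI impI)
  fix i
  have "(\<Sum>x\<in>V. (if x = v then 1 else 0) * x i) = (\<Sum>x\<in>V. if x = v then v i else 0)"
    by (rule sum.cong) auto
  then show "v i = (\<Sum>x\<in>V. (if x = v then 1 else 0) * x i)"
    using assms by simp
qed

lemma spn_sum: assumes "\<forall>k\<in>A. g k \<in> spn N V" "\<forall>i<N. f i = (\<Sum>k\<in>A. \<beta> k * g k i)"
  shows "f \<in> spn N V"
proof -
  from assms(1) have "\<forall>k\<in>A. \<exists>a. \<forall>i<N. g k i = (\<Sum>v\<in>V. a v * v i)" by (simp add: spn_def)
  then obtain a where a: "\<forall>k\<in>A. \<forall>i<N. g k i = (\<Sum>v\<in>V. a k v * v i)" by metis
  show ?thesis unfolding spn_def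
  proof (intro CollectI exI allI impI)
    fix i assume i: "i < N"
    have "f i = (\<Sum>k\<in>A. \<beta> k * (\<Sum>v\<in>V. a k v * v i))" using assms(2) a i by simp
    also have "\<dots> = (\<Sum>k\<in>A. \<Sum>v\<in>V. \<beta> k * a k v * v i)" by (simp add: sum_distrib_left mult_ac)
    also have "\<dots> = (\<Sum>v\<in>V. \<Sum>k\<in>A. \<beta> k * a k v * v i)" by (rule sum.swap)
    also have "\<dots> = (\<Sum>v\<in>V. (\<Sum>k\<in>A. \<beta> k * a k v) * v i)" by (simp add: sum_distrib_right)
    finally show "f i = (\<Sum>v\<in>V. (\<Sum>k\<in>A. \<beta> k * a k v) * v i)" .
  qed
qed

lemma spn_sub: assumes "\<forall>x\<in>V. x \<in> spn N W" shows "spn N V \<subseteq> spn N W"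
proof
  fix f assume "f \<in> spn N V"
  then obtain a where a: "\<forall>i<N. f i = (\<Sum>v\<in>V. a v * v i)" by (auto simp: spn_def)
  show "f \<in> spn N W" by (rule spn_sum[OF _ a]) (use assms in auto)
qed

lemma ip_cnj: "ip N g f = cnj (ip N f g)"
  unfolding ip_def cnj_sum by (simp add: mult.commute)

lemma cs_real: fixes x y :: "'a \<Rightarrow> real"
  shows "(\<Sum>i\<in>I. x i * y i)^2 \<le> (\<Sum>i\<in>I. (x i)^2) * (\<Sum>i\<in>I. (y i)^2)"
proof (cases "(\<Sum>i\<in>I. (y i)^2) > 0")
  case False
  then have "(\<Sum>i\<in>I. (y i)^2) = 0" by (metis sum_nonneg zero_le_power2 not_less order.antisym)
  then have "infinite I \<or> (\<forall>i\<in>I. y i = 0)"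
    using sum_nonneg_eq_0_iff[of I "\<lambda>i. (y i)^2"] by auto
  then show ?thesis by auto
next
  case True
  define r where "r = (\<Sum>i\<in>I. x i * y i) / (\<Sum>i\<in>I. (y i)^2)"
  have "0 \<le> (\<Sum>i\<in>I. (x i - r * y i)^2)" by (simp add: sum_nonneg)
  also have "\<dots> = (\<Sum>i\<in>I. (x i)^2) - 2 * r * (\<Sum>i\<in>I. x i * y i) + r^2 * (\<Sum>i\<in>I. (y i)^2)"
    by (simp add: algebra_simps power2_eq_square sum_distrib_left flip: sum.distrib)
  also have "\<dots> = (\<Sum>i\<in>I. (x i)^2) - (\<Sum>i\<in>I. x i * y i)^2 / (\<Sum>i\<in>I. (y i)^2)"
    using True by (simp add: r_def power2_eq_square)
  finally show ?thesis using True by (simp add: pos_divide_le_eq le_diff_eq)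
qed

lemma spn_nrm: assumes "orthon N B" "\<forall>i<N. f i = (\<Sum>b\<in>B. a b * b i)" "finite B"
  shows "nrm N f = (\<Sum>b\<in>B. (cmod (a b))^2)"
proof -
  have "ip N f f = (\<Sum>i<N. \<Sum>b\<in>B. \<Sum>b'\<in>B. (cnj (a b) * a b') * (cnj (b i) * b' i))"
    unfolding ip_def using assms(2) apply (simp add: cnj_sum sum_product mult_ac)
    apply (rule sum.cong[OF refl], rule sum.swap)
    done
  also have "\<dots> = (\<Sum>b\<in>B. \<Sum>b'\<in>B. \<Sum>i<N. (cnj (a b) * a b') * (cnj (b i) * b' i))"
  proof -
    have "(\<Sum>i<N. \<Sum>b\<in>B. \<Sum>b'\<in>B. (cnj (a b) * a b') * (cnj (b i) * b' i))
       = (\<Sum>b\<in>B. \<Sum>i<N. \<Sum>b'\<in>B. (cnj (a b) * a b') * (cnj (b i) * b' i))" by (rule sum.swap)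
    also have "\<dots> = (\<Sum>b\<in>B. \<Sum>b'\<in>B. \<Sum>i<N. (cnj (a b) * a b') * (cnj (b i) * b' i))"
      by (rule sum.cong[OF refl], rule sum.swap)
    finally show ?thesis .
  qed
  also have "\<dots> = (\<Sum>b\<in>B. \<Sum>b'\<in>B. (cnj (a b) * a b') * ip N b b')"
    by (simp add: ip_def sum_distrib_left)
  also have "\<dots> = (\<Sum>b\<in>B. \<Sum>b'\<in>B. (if b = b' then cnj (a b) * a b' else 0))"
    using assms(1) unfolding orthon_def by (intro sum.cong refl) auto
  also have "\<dots> = (\<Sum>b\<in>B. cnj (a b) * a b)" using assms(3) by simp
  also have "\<dots> = complex_of_real (\<Sum>b\<in>B. (cmod (a b))^2)"
    unfolding of_real_sum by (intro sum.cong refl) (subst complex_norm_square, simp add: mult.commute)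
  finally have "complex_of_real (nrm N f) = complex_of_real (\<Sum>b\<in>B. (cmod (a b))^2)"
    unfolding ip_self .
  then show ?thesis using of_real_eq_iff by blast
qed

lemma spn_pt: assumes "orthon N B" "\<forall>i<N. f i = (\<Sum>b\<in>B. a b * b i)" "i < N" "finite B"
  shows "(cmod (f i))^2 \<le> nrm N f * (\<Sum>b\<in>B. (cmod (b i))^2)"
proof -
  have "cmod (f i) \<le> (\<Sum>b\<in>B. cmod (a b) * cmod (b i))"
    using assms(2,3) by (metis (no_types, lifting) norm_mult norm_sum sum.cong)
  then have "(cmod (f i))^2 \<le> (\<Sum>b\<in>B. cmod (a b) * cmod (b i))^2"
    by (simp add: power_mono)
  also have "\<dots> \<le> (\<Sum>b\<in>B. (cmod (a b))^2) * (\<Sum>b\<in>B. (cmod (b i))^2)" by (rule cs_real)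
  finally show ?thesis using spn_nrm[OF assms(1,2,4)] by simp
qed

lemma orthon_weights: assumes "orthon N B" shows "(\<Sum>i<N. \<Sum>b\<in>B. (cmod (b i))^2) = real (card B)"
proof -
  have "(\<Sum>i<N. \<Sum>b\<in>B. (cmod (b i))^2) = (\<Sum>b\<in>B. nrm N b)"
    unfolding nrm_def by (rule sum.swap)
  also have "\<dots> = (\<Sum>b\<in>B. 1)"
  proof (intro sum.cong refl)
    fix b assume "b \<in> B"
    then have "ip N b b = 1" using assms by (simp add: orthon_def)
    then show "nrm N b = 1" unfolding ip_self by simp
  qed
  finally show ?thesis by simp
qed

lemma gram: assumes "finite V"
  shows "\<exists>B. finite B \<and> card B \<le> card V \<and> orthon N B \<and> spn N V \<subseteq> spn N B"
  using assms
proof (induction V rule: finite_induct)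
  case empty
  show ?case by (intro exI[of _ "{}"]) (simp add: orthon_def)
next
  case (insert v V)
  then obtain B where B: "finite B" "card B \<le> card V" "orthon N B" "spn N V \<subseteq> spn N B" by blast
  define p where "p = (\<lambda>i. \<Sum>b\<in>B. ip N b v * b i)"
  define r where "r = (\<lambda>i. v i - p i)"
  have orth_r: "ip N b r = 0" if b: "b \<in> B" for b
  proof -
    have "ip N b r = ip N b v - (\<Sum>i<N. \<Sum>b'\<in>B. ip N b' v * (cnj (b i) * b' i))"
      unfolding ip_def r_def p_def
      by (simp add: right_diff_distrib sum_subtractf sum_distrib_left mult_ac)
    also have "(\<Sum>i<N. \<Sum>b'\<in>B. ip N b' v * (cnj (b i) * b' i)) = (\<Sum>b'\<in>B. ip N b' v * ip N b b')"
      unfolding ip_def by (subst sum.swap) (simp add: sum_distrib_left)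
    also have "\<dots> = (\<Sum>b'\<in>B. if b = b' then ip N b' v else 0)"
      using B(3) b unfolding orthon_def by (intro sum.cong refl) auto
    also have "\<dots> = ip N b v" using b B(1) by simp
    finally show ?thesis by simp
  qed
  have VB: "\<forall>x\<in>V. x \<in> spn N B" using B(4) spn_base[OF insert(1)] by blast
  show ?case
  proof (cases "nrm N r = 0")
    case True
    then have r0: "\<forall>i<N. r i = 0"
      unfolding nrm_def using sum_nonneg_eq_0_iff[of "{..<N}" "\<lambda>i. (cmod (r i))^2"] by auto
    have "v \<in> spn N B" unfolding spn_def
    proof (intro CollectI exI allI impI)
      fix i assume "i < N"
      then show "v i = (\<Sum>b\<in>B. ip N b v * b i)" using r0 by (simp add: r_def p_def)
    qed
    then have "spn N (insert v V) \<subseteq> spn N B" using VB by (intro spn_sub) auto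
    then show ?thesis using B insert by (intro exI[of _ B]) auto
  next
    case False
    then have rpos: "nrm N r > 0" using nrm_nonneg[of N r] by linarith
    define s where "s = sqrt (nrm N r)"
    have spos: "s > 0" using rpos by (simp add: s_def)
    define u where "u = (\<lambda>i. r i / complex_of_real s)"
    have ipu: "ip N b u = ip N b r / complex_of_real s" for b
      unfolding ip_def u_def by (simp add: sum_divide_distrib)
    have "ip N u u = ip N r r / complex_of_real (s * s)"
      unfolding ip_def u_def by (simp add: sum_divide_distrib)
    also have "\<dots> = 1" using rpos unfolding ip_self s_def
      by (simp flip: of_real_mult)
    finally have uu: "ip N u u = 1" .
    have ub: "ip N b u = 0" if "b \<in> B" for b using ipu orth_r[OF that] by simp
    have bu: "ip N u b = 0" if "b \<in> B" for b using ub[OF that] ip_cnj by (metis complex_cnj_zero)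
    have uB: "u \<notin> B" using ub uu by force
    have orth': "orthon N (insert u B)"
      using B(3) uu ub bu uB unfolding orthon_def by auto
    have vin: "v \<in> spn N (insert u B)" unfolding spn_def
    proof (intro CollectI exI allI impI)
      fix i assume "i < N"
      have "(\<Sum>x\<in>insert u B. (if x = u then complex_of_real s else ip N x v) * x i)
          = complex_of_real s * u i + (\<Sum>b\<in>B. ip N b v * b i)"
        using B(1) uB by (simp add: sum.insert) (intro sum.cong, auto)
      also have "\<dots> = v i" using spos by (simp add: u_def r_def p_def)
      finally show "v i = (\<Sum>x\<in>insert u B. (if x = u then complex_of_real s else ip N x v) * x i)" by simp
    qed
    have "\<forall>x\<in>B. x \<in> spn N (insert u B)" using B(1) spn_base[of "insert u B"] by blast
    then have "spn N B \<subseteq> spn N (insert u B)" by (rule spn_sub)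
    then have "spn N (insert v V) \<subseteq> spn N (insert u B)" using VB vin by (intro spn_sub) auto
    moreover have "card (insert u B) \<le> card (insert v V)" using B(1,2) uB insert(1,2) by simp
    ultimately show ?thesis using B(1) orth' by (intro exI[of _ "insert u B"]) auto
  qed
qed

definition Ks :: "nat \<Rightarrow> (bool list \<times> bool) set" where
  "Ks n = {x. length x = n} \<times> UNIV"

definition opk :: "nat \<Rightarrow> bool list \<times> bool \<Rightarrow> (nat \<Rightarrow> complex) \<Rightarrow> nat \<Rightarrow> complex" where
  "opk n k f = (\<lambda>i. if xof n i = fst k then (if snd k then f (flp n i) else f i) else 0)"

definition coef :: "(bool list \<Rightarrow> bool) \<Rightarrow> bool list \<times> bool \<Rightarrow> complex" where
  "coef c k = (if c (fst k) = snd k then 1 else 0)"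

definition step :: "nat \<Rightarrow> nat \<Rightarrow> complex mat \<Rightarrow> (nat \<Rightarrow> complex) set \<Rightarrow> (nat \<Rightarrow> complex) set" where
  "step N n U V = (\<lambda>p. mapp N U (opk n (fst p) (snd p))) ` (Ks n \<times> V)"

fun Vs :: "nat \<Rightarrow> nat \<Rightarrow> (nat \<Rightarrow> complex) set \<Rightarrow> complex mat list \<Rightarrow> (nat \<Rightarrow> complex) set" where
  "Vs N n V [] = V"
| "Vs N n V (U # Us) = Vs N n (step N n U V) Us"

lemma Ks_finite: "finite (Ks n)"
  unfolding Ks_def using finite_lists_length_eq[of "UNIV :: bool set" n] by simp

lemma Ks_card: "card (Ks n) = 2^n * 2"
  unfolding Ks_def using card_lists_length_eq[of "UNIV :: bool set" n]
  by (simp add: card_cartesian_product)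

lemma qapp_decomp: "qapp n c f i = (\<Sum>k\<in>Ks n. coef c k * opk n k f i)"
proof -
  have "(\<Sum>k\<in>Ks n. coef c k * opk n k f i)
      = (\<Sum>k\<in>Ks n. if k = (xof n i, c (xof n i)) then qapp n c f i else 0)"
    by (intro sum.cong refl) (auto simp: coef_def opk_def qapp_def tgt_def)
  also have "\<dots> = qapp n c f i"
    using Ks_finite by (simp add: Ks_def xof_def)
  finally show ?thesis by simp
qed

lemma opk_lin: assumes "n < m" "\<forall>i<2^m. f i = (\<Sum>v\<in>V. a v * v i)" "j < 2^m"
  shows "opk n k f j = (\<Sum>v\<in>V. a v * opk n k v j)"
  using assms flp_lt[OF assms(1,3)] by (auto simp: opk_def)

lemma step_finite: "finite V \<Longrightarrow> finite (step N n U V)"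
  unfolding step_def using Ks_finite by simp

lemma step_card: assumes "finite V" shows "card (step N n U V) \<le> 2^n * 2 * card V"
proof -
  have "card (step N n U V) \<le> card (Ks n \<times> V)" unfolding step_def
    by (rule card_image_le) (simp add: Ks_finite assms)
  also have "\<dots> = 2^n*2*card V" by (simp add: card_cartesian_product Ks_card)
  finally show ?thesis .
qed

lemma Vs_props: "finite V \<Longrightarrow> finite (Vs N n V Us) \<and> card (Vs N n V Us) \<le> card V * (2^n*2)^length Us"
proof (induction Us arbitrary: V)
  case Nil then show ?case by simp
next
  case (Cons U Us)
  have f: "finite (step N n U V)" using step_finite[OF Cons.prems] .
  from Cons.IH[OF f] have "finite (Vs N n (step N n U V) Us)"
    "card (Vs N n (step N n U V) Us) \<le> card (step N n U V) * (2^n*2)^length Us" by auto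
  moreover have "card (step N n U V) * (2^n*2)^length Us \<le> (2^n * 2 * card V) * (2^n*2)^length Us"
    by (rule mult_right_mono[OF step_card[OF Cons.prems]]) simp
  moreover have "(2^n * 2 * card V) * (2^n*2)^length Us = card V * (2^n*2)^length (U#Us)"
    by (simp only: list.size power_Suc mult_ac add_Suc_right add_0_right)
  ultimately have "card (Vs N n (step N n U V) Us) \<le> card V * (2^n*2)^length (U#Us)" by linarith
  then show ?case using \<open>finite (Vs N n (step N n U V) Us)\<close> by simp
qed

lemma step_spn: assumes "n < m" "f \<in> spn (2^m) V" "finite V"
  shows "mapp (2^m) U (qapp n c f) \<in> spn (2^m) (step (2^m) n U V)"
proof -
  let ?N = "(2::nat)^m"
  obtain a where a: "\<forall>i<?N. f i = (\<Sum>v\<in>V. a v * v i)" using assms(2) by (auto simp: spn_def)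
  let ?g = "\<lambda>p. mapp ?N U (opk n (fst p) (snd p))"
  show ?thesis
  proof (rule spn_sum[where A = "Ks n \<times> V" and g = ?g and \<beta> = "\<lambda>p. coef c (fst p) * a (snd p)"])
    show "\<forall>k\<in>Ks n \<times> V. ?g k \<in> spn ?N (step ?N n U V)"
    proof
      fix k assume "k \<in> Ks n \<times> V"
      then have "?g k \<in> step ?N n U V" unfolding step_def by (rule imageI)
      then show "?g k \<in> spn ?N (step ?N n U V)" by (rule spn_base[OF step_finite[OF assms(3)]])
    qed
    show "\<forall>i<?N. mapp ?N U (qapp n c f) i = (\<Sum>k\<in>Ks n \<times> V. coef c (fst k) * a (snd k) * ?g k i)"
    proof (intro allI impI)
      fix i assume i: "i < ?N"
      have "mapp ?N U (qapp n c f) i = (\<Sum>j<?N. U $$ (i,j) * (\<Sum>k\<in>Ks n. coef c k * opk n k f j))"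
        unfolding mapp_def by (simp only: qapp_decomp)
      also have "\<dots> = (\<Sum>j<?N. U $$ (i,j) * (\<Sum>k\<in>Ks n. coef c k * (\<Sum>v\<in>V. a v * opk n k v j)))"
      proof (rule sum.cong[OF refl])
        fix j assume "j \<in> {..<?N}"
        then have j: "j < ?N" by simp
        show "U $$ (i,j) * (\<Sum>k\<in>Ks n. coef c k * opk n k f j) = U $$ (i,j) * (\<Sum>k\<in>Ks n. coef c k * (\<Sum>v\<in>V. a v * opk n k v j))"
          by (simp only: opk_lin[OF assms(1) a j])
      qed
      also have "\<dots> = (\<Sum>j<?N. \<Sum>p\<in>Ks n \<times> V. coef c (fst p) * a (snd p) * (U $$ (i,j) * opk n (fst p) (snd p) j))"
      proof (rule sum.cong[OF refl])
        fix j
        have "U $$ (i,j) * (\<Sum>k\<in>Ks n. coef c k * (\<Sum>v\<in>V. a v * opk n k v j))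
          = (\<Sum>k\<in>Ks n. \<Sum>v\<in>V. coef c (fst (k,v)) * a (snd (k,v)) * (U $$ (i,j) * opk n (fst (k,v)) (snd (k,v)) j))"
          by (simp add: sum_distrib_left mult_ac)
        also have "\<dots> = (\<Sum>p\<in>Ks n \<times> V. coef c (fst p) * a (snd p) * (U $$ (i,j) * opk n (fst p) (snd p) j))"
          by (rule sum.cartesian_product'[symmetric])
        finally show "U $$ (i,j) * (\<Sum>k\<in>Ks n. coef c k * (\<Sum>v\<in>V. a v * opk n k v j))
          = (\<Sum>p\<in>Ks n \<times> V. coef c (fst p) * a (snd p) * (U $$ (i,j) * opk n (fst p) (snd p) j))" .
      qed
      also have "\<dots> = (\<Sum>p\<in>Ks n \<times> V. \<Sum>j<?N. coef c (fst p) * a (snd p) * (U $$ (i,j) * opk n (fst p) (snd p) j))"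
        by (rule sum.swap)
      also have "\<dots> = (\<Sum>p\<in>Ks n \<times> V. coef c (fst p) * a (snd p) * ?g p i)"
        unfolding mapp_def by (simp only: sum_distrib_left mult.assoc)
      finally show "mapp ?N U (qapp n c f) i = (\<Sum>k\<in>Ks n \<times> V. coef c (fst k) * a (snd k) * ?g k i)" .
    qed
  qed
qed

lemma evol:
  assumes "n < m" "\<forall>U\<in>set Us. unitary_on m U"
  shows "w \<in> carrier_vec (2^m) \<Longrightarrow> nrm (2^m) (vf w) = 1 \<Longrightarrow> vf w \<in> spn (2^m) V \<Longrightarrow> finite V \<Longrightarrow>
    foldl (\<lambda>v U. U *\<^sub>v (QMQ m n c *\<^sub>v v)) w Us \<in> carrier_vec (2^m) \<and>
    nrm (2^m) (vf (foldl (\<lambda>v U. U *\<^sub>v (QMQ m n c *\<^sub>v v)) w Us)) = 1 \<and>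
    vf (foldl (\<lambda>v U. U *\<^sub>v (QMQ m n c *\<^sub>v v)) w Us) \<in> spn (2^m) (Vs (2^m) n V Us)"
  using assms(2)
proof (induction Us arbitrary: w V)
  case Nil then show ?case by simp
next
  case (Cons U Us)
  let ?N = "(2::nat)^m"
  have U: "U \<in> carrier_mat ?N ?N" "cadjoint U * U = 1\<^sub>m ?N"
    using Cons.prems(5) by (auto simp: unitary_on_def)
  define w1 where "w1 = U *\<^sub>v (QMQ m n c *\<^sub>v w)"
  have qw: "QMQ m n c *\<^sub>v w \<in> carrier_vec ?N" using QMQ_carrier Cons.prems(1) by (metis mult_mat_vec_carrier)
  have w1c: "w1 \<in> carrier_vec ?N" unfolding w1_def using U(1) qw by auto
  have w1e: "vf w1 i = mapp ?N U (qapp n c (vf w)) i" if "i < ?N" for i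
  proof -
    have "vf w1 i = mapp ?N U (vf (QMQ m n c *\<^sub>v w)) i"
      unfolding w1_def using vf_mult[OF U(1) qw that] .
    also have "mapp ?N U (vf (QMQ m n c *\<^sub>v w)) = mapp ?N U (qapp n c (vf w))"
      by (rule mapp_cong) (use vf_qmq[OF assms(1) Cons.prems(1)] in auto)
    finally show ?thesis .
  qed
  have "nrm ?N (vf w1) = nrm ?N (mapp ?N U (qapp n c (vf w)))" by (rule nrm_cong) (use w1e in auto)
  also have "\<dots> = 1" using unitary_nrm[OF U] nrm_qapp[OF assms(1)] Cons.prems(2) by simp
  finally have w1n: "nrm ?N (vf w1) = 1" .
  have w1s: "vf w1 \<in> spn ?N (step ?N n U V)"
    using spn_cong[OF step_spn[OF assms(1) Cons.prems(3,4)]] w1e by blast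
  have "finite (step ?N n U V)" using step_finite[OF Cons.prems(4)] .
  from Cons.IH[OF w1c w1n w1s this] Cons.prems(5) show ?case by (simp add: w1_def)
qed

lemma sum_pow_card: "finite S \<Longrightarrow> (\<Sum>E\<in>Pow S. (x::real) ^ card E) = (1 + x) ^ card S"
proof (induction S rule: finite_induct)
  case empty then show ?case by simp
next
  case (insert a S)
  have inj: "inj_on (insert a) (Pow S)" using insert(2) unfolding inj_on_def
    by (metis Diff_insert_absorb PowD subsetD)
  have disj: "Pow S \<inter> insert a ` Pow S = {}" using insert(2) by blast
  have "(\<Sum>E\<in>Pow (insert a S). x ^ card E) = (\<Sum>E\<in>Pow S. x ^ card E) + (\<Sum>E\<in>insert a ` Pow S. x ^ card E)"
    unfolding Pow_insert using insert(1) disj by (intro sum.union_disjoint) auto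
  also have "(\<Sum>E\<in>insert a ` Pow S. x ^ card E) = (\<Sum>E\<in>Pow S. x ^ card (insert a E))"
    using sum.reindex[OF inj] by simp
  also have "\<dots> = (\<Sum>E\<in>Pow S. x * x ^ card E)"
  proof (intro sum.cong refl)
    fix E assume "E \<in> Pow S"
    then have "finite E" "a \<notin> E" using insert(1,2) finite_subset by auto
    then show "x ^ card (insert a E) = x * x ^ card E" by simp
  qed
  also have "(\<Sum>E\<in>Pow S. x * x ^ card E) = x * (1 + x) ^ card S"
    using insert.IH by (simp add: sum_distrib_left[symmetric])
  finally show ?case using insert by (simp add: algebra_simps)
qed

lemma K_bound: assumes "finite S" "card S = d"
  shows "real (card {E. E \<subseteq> S \<and> 10 * card E \<le> d}) \<le> 2 powr (real d / 2)"
proof -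
  let ?A = "{E. E \<subseteq> S \<and> 10 * card E \<le> d}"
  have fA: "finite ?A" using assms(1) by simp
  have "real (card ?A) = (\<Sum>E\<in>?A. 1)" by simp
  also have "\<dots> \<le> (\<Sum>E\<in>?A. 2 powr (3 * real d / 10) * (1/8) ^ card E)"
  proof (intro sum_mono)
    fix E assume "E \<in> ?A"
    then have le: "real (card E) \<le> real d / 10" by auto
    have p8: "(2::real) powr (3 * real (card E)) = 8 ^ card E"
    proof -
      have "(2::real) powr (3 * real (card E)) = 2 powr real (3 * card E)" by simp
      also have "\<dots> = 2 ^ (3 * card E)" by (rule powr_realpow) simp
      also have "\<dots> = 8 ^ card E" by (simp add: power_mult)
      finally show ?thesis .
    qed
    have "2 powr (3 * real d / 10) * (1/8::real) ^ card E = 2 powr (3 * real d / 10) / 2 powr (3 * real (card E))"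
      unfolding p8 by (simp add: power_one_over)
    also have "\<dots> = 2 powr (3 * real d / 10 - 3 * real (card E))" by (rule powr_diff[symmetric])
    finally have "2 powr (3 * real d / 10) * (1/8::real) ^ card E = 2 powr (3 * real d / 10 - 3 * real (card E))" .
    also have "\<dots> \<ge> 1" using le by (intro ge_one_powr_ge_zero) auto
    finally show "1 \<le> 2 powr (3 * real d / 10) * (1/8::real) ^ card E" .
  qed
  also have "\<dots> \<le> (\<Sum>E\<in>Pow S. 2 powr (3 * real d / 10) * (1/8) ^ card E)"
    using assms(1) by (intro sum_mono2) auto
  also have "\<dots> = 2 powr (3 * real d / 10) * (9/8) ^ d"
    using sum_pow_card[OF assms(1), of "1/8"] assms(2) by (simp add: sum_distrib_left[symmetric])
  also have "\<dots> \<le> 2 powr (3 * real d / 10) * 2 powr (real d / 5)"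
  proof -
    have "((9/8::real) ^ 5) powr (1/5) = ((9/8) powr real 5) powr (1/5)"
      by (subst powr_realpow) simp_all
    also have "\<dots> = (9/8) powr (real 5 * (1/5))" by (rule powr_powr)
    also have "\<dots> = 9/8" by simp
    finally have "(9/8::real) = ((9/8) ^ 5) powr (1/5)" by simp
    also have "\<dots> \<le> 2 powr (1/5)" by (intro powr_mono2) (auto simp: power_divide)
    finally have "(9/8::real) ^ d \<le> (2 powr (1/5)) ^ d" by (intro power_mono) auto
    also have "\<dots> = (2 powr (1/5)) powr real d" by (subst powr_realpow) simp_all
    also have "\<dots> = 2 powr (1/5 * real d)" by (rule powr_powr)
    also have "\<dots> = 2 powr (real d / 5)" by simp
    finally have "(9/8::real) ^ d \<le> 2 powr (real d / 5)" .
    then show ?thesis by (rule mult_left_mono) simp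
  qed
  also have "\<dots> = 2 powr (3 * real d / 10 + real d / 5)" by (rule powr_add[symmetric])
  also have "3 * real d / 10 + real d / 5 = real d / 2" by linarith
  finally show ?thesis .
qed

lemma K_small: fixes S :: "'a set" assumes "finite S" "card S = d" "d < 10"
  shows "card {E. E \<subseteq> S \<and> 10 * card E \<le> d} \<le> 1"
proof -
  have sub: "{E. E \<subseteq> S \<and> 10 * card E \<le> d} \<subseteq> {{}}"
  proof
    fix E assume "E \<in> {E. E \<subseteq> S \<and> 10 * card E \<le> d}"
    then have "E \<subseteq> S" "card E = 0" using assms(3) by auto
    then have "E = {}" using assms(1) finite_subset by (metis card_0_eq)
    then show "E \<in> {{}}" by simp
  qed
  have "card {E. E \<subseteq> S \<and> 10 * card E \<le> d} \<le> card {{}::'a set}"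
    by (rule Finite_Set.card_mono) (simp, fact)
  then show ?thesis by simp
qed

lemma count_close:
  assumes "finite S" "card S = d" "d > 0" "\<forall>U. U \<subseteq> S \<longrightarrow> {x\<in>S. cf U x} = U"
  shows "card {U. U \<subseteq> S \<and> rel_dist S h (cf U) \<le> 1/10} \<le> card {E. E \<subseteq> S \<and> 10 * card E \<le> d}"
proof -
  let ?f = "\<lambda>U. {x\<in>S. h x \<noteq> (x \<in> U)}"
  show ?thesis
  proof (rule card_inj_on_le[where f = ?f])
    show "inj_on ?f {U. U \<subseteq> S \<and> rel_dist S h (cf U) \<le> 1/10}"
    proof (rule inj_onI)
      fix U1 U2 assume U1: "U1 \<in> {U. U \<subseteq> S \<and> rel_dist S h (cf U) \<le> 1/10}"
        and U2: "U2 \<in> {U. U \<subseteq> S \<and> rel_dist S h (cf U) \<le> 1/10}" and eq: "?f U1 = ?f U2"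
      have "(x \<in> U1) = (x \<in> U2)" if x: "x \<in> S" for x
      proof -
        have "(x \<in> ?f U1) = (x \<in> ?f U2)" using eq by simp
        then show ?thesis using x by auto
      qed
      moreover have "U1 \<subseteq> S" "U2 \<subseteq> S" using U1 U2 by auto
      ultimately show "U1 = U2" by blast
    qed
    show "finite {E. E \<subseteq> S \<and> 10 * card E \<le> d}" using assms(1) by simp
    show "?f ` {U. U \<subseteq> S \<and> rel_dist S h (cf U) \<le> 1/10} \<subseteq> {E. E \<subseteq> S \<and> 10 * card E \<le> d}"
    proof
      fix E assume "E \<in> ?f ` {U. U \<subseteq> S \<and> rel_dist S h (cf U) \<le> 1/10}"
      then obtain U where U: "U \<subseteq> S" "rel_dist S h (cf U) \<le> 1/10" "E = ?f U" by blast
      have cfU: "cf U x = (x \<in> U)" if "x \<in> S" for x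
      proof -
        have "{x\<in>S. cf U x} = U" using assms(4) U(1) by simp
        then show ?thesis using that by blast
      qed
      have "{x\<in>S. h x \<noteq> cf U x} = E"
        unfolding U(3) using cfU by auto
      then have "real (card E) / real d \<le> 1/10" using U(2) assms(2) by (simp add: rel_dist_def)
      then have "10 * real (card E) \<le> real d" using assms(3) by (simp add: field_simps)
      then have "10 * card E \<le> d" by linarith
      then show "E \<in> {E. E \<subseteq> S \<and> 10 * card E \<le> d}" using U(3) by auto
    qed
  qed
qed

lemma final_arith:
  fixes n d T :: nat and K :: real
  assumes "12 * n * T < d" "n \<ge> 1" "d \<ge> 1"
    and A: "2^d * (2/3) \<le> K * (2^n*2)^T"
    and B: "K \<le> 2 powr (real d / 2)" and C: "d < 10 \<Longrightarrow> K \<le> 1"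
  shows False
proof (cases "d = 1")
  case True
  then have "12 * n * T < 1" using assms(1) by simp
  then have "12 * n * T = 0" by linarith
  then have "T = 0" using assms(2) by simp
  then have "(2::real)^1 * (2/3) \<le> K" using A True by simp
  moreover have "K \<le> 1" using C True by simp
  ultimately show False by simp
next
  case False
  then have d2: "d \<ge> 2" using assms(3) by simp
  have e: "6 * ((n+1) * T) \<le> 12 * n * T" using assms(2) by (simp add: algebra_simps)
  have "(2^n*2::real)^T = 2^((n+1)*T)" by (metis power_mult power_Suc2 Suc_eq_plus1)
  also have "\<dots> = 2 powr (real ((n+1)*T))" by (subst powr_realpow) auto
  also have "\<dots> \<le> 2 powr (real d / 6)"
  proof -
    have "6 * ((n+1)*T) < d" using e assms(1) by linarith
    then have "real (6 * ((n+1)*T)) < real d" using of_nat_less_iff by blast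
    then have "real ((n+1)*T) \<le> real d / 6" by (simp only: of_nat_mult of_nat_numeral)
    then show ?thesis by (intro powr_mono) auto
  qed
  finally have p: "(2^n*2::real)^T \<le> 2 powr (real d / 6)" .
  have pos: "(0::real) < (2^n*2)^T" by simp
  have K0: "K \<ge> 0"
  proof (rule ccontr)
    assume "\<not> K \<ge> 0"
    then have "K * (2^n*2)^T < 0" using pos by (simp add: mult_neg_pos)
    moreover have "(0::real) < 2^d * (2/3)" by simp
    ultimately show False using A by linarith
  qed
  have "K * (2^n*2)^T \<le> 2 powr (real d / 2) * 2 powr (real d / 6)"
    by (rule mult_mono[OF B p]) (use K0 in auto)
  moreover have "(2::real) powr real d = 2^d" by (rule powr_realpow) simp
  ultimately have "2 powr real d * (2/3) \<le> 2 powr (real d / 2) * 2 powr (real d / 6)"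
    using A by linarith
  also have "\<dots> = 2 powr (real d / 2 + real d / 6)" by (rule powr_add[symmetric])
  also have "real d / 2 + real d / 6 = 2 * real d / 3" by linarith
  finally
  have X: "2 powr real d * (2/3) \<le> 2 powr (2 * real d / 3)" .
  have dd: "(2::real) powr real d = 2 powr (real d / 3) * 2 powr (2 * real d / 3)"
  proof -
    have "real d = real d / 3 + 2 * real d / 3" by linarith
    then have "(2::real) powr real d = 2 powr (real d / 3 + 2 * real d / 3)" by (rule arg_cong)
    also have "\<dots> = 2 powr (real d / 3) * 2 powr (2 * real d / 3)" by (rule powr_add)
    finally show ?thesis .
  qed
  have bpos: "(0::real) < 2 powr (2 * real d / 3)" by simp
  have "(2 powr (real d / 3) * (2/3)) * 2 powr (2 * real d / 3) \<le> 1 * 2 powr (2 * real d / 3)"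
    using X unfolding dd by (simp only: mult_ac mult_1)
  then have "2 powr (real d / 3) * (2/3) \<le> 1" using bpos by (simp only: mult_le_cancel_right_pos)
  moreover have "2 powr (real d / 3) \<ge> 2 powr (2/3)" using d2 by (intro powr_mono) auto
  moreover have "2 powr (2/3::real) > 3/2"
  proof (rule ccontr)
    assume "\<not> 2 powr (2/3::real) > 3/2"
    then have "(2 powr (2/3::real)) ^ 3 \<le> (3/2) ^ 3" by (intro power_mono) auto
    moreover have "(2 powr (2/3::real)) ^ 3 = 4"
    proof -
      have "(2 powr (2/3::real)) ^ 3 = (2 powr (2/3)) powr real 3" by (subst powr_realpow) simp_all
      also have "\<dots> = 2 powr (2/3 * real 3)" by (rule powr_powr)
      also have "\<dots> = 2 powr real 2" by simp
      also have "\<dots> = 2 ^ 2" by (rule powr_realpow) simp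
      finally show ?thesis by simp
    qed
    moreover have "(3/2::real) ^ 3 = 27/8" by (simp add: power3_eq_cube)
    ultimately show False by simp
  qed
  ultimately show False by linarith
qed

lemma succ_le:
  "success_prob m ms v decode S c \<le>
    (\<Sum>i<2^m. if (\<exists>h. decode (map (qubit i) ms) = Some h \<and> rel_dist S h c \<le> 1/10)
               then (cmod (v $ i))^2 else 0)"
proof -
  let ?P = "\<lambda>out. \<exists>h. decode out = Some h \<and> rel_dist S h c \<le> 1/10"
  let ?G = "{out. length out = length ms \<and> ?P out}"
  let ?g = "\<lambda>i. map (qubit i) ms"
  let ?f = "\<lambda>i. (cmod (v $ i))^2"
  let ?A = "{i. i < 2^m \<and> ?g i \<in> ?G}"
  have fG: "finite ?G"
    by (rule finite_subset[OF _ finite_lists_length_eq[of "UNIV :: bool set" "length ms"]]) auto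
  have fA: "finite ?A" by simp
  have "success_prob m ms v decode S c = (\<Sum>out\<in>?G. \<Sum>i\<in>{i. i \<in> ?A \<and> ?g i = out}. ?f i)"
    unfolding success_prob_def out_prob_def
    by (intro sum.cong refl) auto
  also have "\<dots> = sum ?f ?A" by (rule sum.group[OF fA fG]) auto
  also have "?A = {i \<in> {..<2^m}. ?P (?g i)}" by auto
  also have "sum ?f {i \<in> {..<2^m}. ?P (?g i)} = (\<Sum>i<2^m. if ?P (?g i) then ?f i else 0)"
    by (rule sum.inter_filter) simp
  finally show ?thesis by simp
qed

lemma sum_if_const: "finite A \<Longrightarrow> (\<Sum>x\<in>A. if P x then (c::real) else 0) = real (card {x\<in>A. P x}) * c"
  by (simp add: sum.inter_filter[symmetric])

theorem mainTheorem10: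
  fixes n m d :: nat
    and C :: "(bool list \<Rightarrow> bool) set"
    and S :: "bool list set"
    and U0 :: "complex mat" and Us :: "complex mat list"
    and ms :: "nat list"
    and decode :: "bool list \<Rightarrow> (bool list \<Rightarrow> bool) option"
  assumes S_sub: "S \<subseteq> {x. length x = n}"
    and S_card: "card S = d"
    and shat: "shattered C S"
    and reg: "n + 1 \<le> m"
    and U0_unit: "unitary_on m U0"
    and Us_unit: "\<forall>U\<in>set Us. unitary_on m U"
    and ms_ok: "distinct ms" "\<forall>k\<in>set ms. k < m"
    and learns: "\<forall>c\<in>C. success_prob m ms (net_state m U0 Us (QMQ m n c)) decode S c \<ge> 2/3"
  shows "real (length Us) \<ge> real d / (12 * real n)"
proof (rule ccontr)
  assume neg: "\<not> real (length Us) \<ge> real d / (12 * real n)"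
  define T where "T = length Us"
  have n1: "n \<ge> 1"
  proof (rule ccontr)
    assume "\<not> n \<ge> 1" then have "n = 0" by simp
    then show False using neg by simp
  qed
  have d1: "d \<ge> 1"
  proof (rule ccontr)
    assume "\<not> d \<ge> 1" then have "d = 0" by simp
    then show False using neg by simp
  qed
  have "real T < real d / (12 * real n)" using neg by (simp add: T_def)
  then have "real T * (12 * real n) < real d" using n1 by (simp add: pos_less_divide_eq)
  then have "real (12 * n * T) < real d" by (simp add: mult_ac)
  then have lt: "12 * n * T < d" by (simp only: of_nat_less_iff)
  have nm: "n < m" using reg by simp
  have finS: "finite S" using S_card d1 card_ge_0_finite by force
  let ?N = "(2::nat)^m"
  have U0c: "U0 \<in> carrier_mat ?N ?N" "cadjoint U0 * U0 = 1\<^sub>m ?N" using U0_unit by (auto simp: unitary_on_def)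
  define w0 where "w0 = U0 *\<^sub>v unit_vec ?N 0"
  have w0c: "w0 \<in> carrier_vec ?N" unfolding w0_def using U0c(1) by auto
  have "nrm ?N (vf w0) = nrm ?N (mapp ?N U0 (vf (unit_vec ?N 0)))"
    by (rule nrm_cong) (use vf_mult[OF U0c(1)] in \<open>auto simp: w0_def\<close>)
  also have "\<dots> = nrm ?N (vf (unit_vec ?N 0))" by (rule unitary_nrm[OF U0c])
  also have "\<dots> = (\<Sum>i<?N. if i = 0 then 1 else 0)"
    unfolding nrm_def vf_def by (intro sum.cong refl) auto
  also have "\<dots> = 1" by simp
  finally have w0n: "nrm ?N (vf w0) = 1" .
  define V0 where "V0 = {vf w0}"
  have V0f: "finite V0" by (simp add: V0_def)
  have w0s: "vf w0 \<in> spn ?N V0" using spn_base[OF V0f] by (simp add: V0_def)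
  define W where "W = Vs ?N n V0 Us"
  have Wp: "finite W" "card W \<le> (2^n*2)^T" using Vs_props[OF V0f, of ?N n Us]
    by (auto simp: W_def V0_def T_def)
  obtain B where B: "finite B" "card B \<le> card W" "orthon ?N B" "spn ?N W \<subseteq> spn ?N B"
    using gram[OF Wp(1)] by blast
  define wt where "wt i = (\<Sum>b\<in>B. (cmod (b i))^2)" for i
  have wt0: "wt i \<ge> 0" for i unfolding wt_def by (intro sum_nonneg) auto
  have pt: "(cmod (net_state m U0 Us (QMQ m n c) $ i))^2 \<le> wt i" if i: "i < ?N" for c i
  proof -
    have ns: "net_state m U0 Us (QMQ m n c) = foldl (\<lambda>v U. U *\<^sub>v (QMQ m n c *\<^sub>v v)) w0 Us"
      by (simp add: net_state_def w0_def)
    from evol[OF nm Us_unit w0c w0n w0s V0f, of c]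
    have e: "nrm ?N (vf (net_state m U0 Us (QMQ m n c))) = 1"
      "vf (net_state m U0 Us (QMQ m n c)) \<in> spn ?N W"
      unfolding ns W_def by auto
    then have "vf (net_state m U0 Us (QMQ m n c)) \<in> spn ?N B" using B(4) by blast
    then obtain a where a: "\<forall>i<?N. vf (net_state m U0 Us (QMQ m n c)) i = (\<Sum>b\<in>B. a b * b i)"
      by (auto simp: spn_def)
    from spn_pt[OF B(3) a i B(1)] e(1) show ?thesis by (simp add: wt_def vf_def)
  qed
  define good where "good c i = (\<exists>h. decode (map (qubit i) ms) = Some h \<and> rel_dist S h c \<le> 1/10)" for c i
  define cU where "cU U = (SOME c. c \<in> C \<and> {x\<in>S. c x} = U)" for U
  have cU: "cU U \<in> C \<and> {x\<in>S. cU U x} = U" if "U \<subseteq> S" for U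
  proof -
    have sh: "\<forall>U\<subseteq>S. \<exists>c\<in>C. {x\<in>S. c x} = U" using shat by (simp only: shattered_def)
    have "\<exists>c\<in>C. {x\<in>S. c x} = U" by (rule sh[rule_format, OF that])
    then have "\<exists>c. c \<in> C \<and> {x\<in>S. c x} = U" by (simp only: Bex_def)
    then show ?thesis unfolding cU_def by (rule someI_ex)
  qed
  define K where "K = card {E. E \<subseteq> S \<and> 10 * card E \<le> d}"
  have cnt: "card {U \<in> Pow S. good (cU U) i} \<le> K" for i
  proof (cases "decode (map (qubit i) ms)")
    case None
    then have e: "{U \<in> Pow S. good (cU U) i} = {}" by (auto simp: good_def)
    show ?thesis unfolding e by simp
  next
    case (Some h)
    then have "{U \<in> Pow S. good (cU U) i} = {U. U \<subseteq> S \<and> rel_dist S h (cU U) \<le> 1/10}"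
      by (auto simp: good_def)
    also have "card \<dots> \<le> K" unfolding K_def
      by (rule count_close[OF finS S_card]) (use d1 cU in auto)
    finally show ?thesis .
  qed
  have "real (2^d) * (2/3) = (\<Sum>U\<in>Pow S. 2/3)" using finS S_card by (simp add: card_Pow)
  also have "\<dots> \<le> (\<Sum>U\<in>Pow S. success_prob m ms (net_state m U0 Us (QMQ m n (cU U))) decode S (cU U))"
    by (intro sum_mono) (use learns cU in auto)
  also have "\<dots> \<le> (\<Sum>U\<in>Pow S. \<Sum>i<?N. if good (cU U) i then wt i else 0)"
  proof (intro sum_mono)
    fix U assume "U \<in> Pow S"
    have "success_prob m ms (net_state m U0 Us (QMQ m n (cU U))) decode S (cU U)
      \<le> (\<Sum>i<?N. if good (cU U) i then (cmod (net_state m U0 Us (QMQ m n (cU U)) $ i))^2 else 0)"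
      using succ_le unfolding good_def .
    also have "\<dots> \<le> (\<Sum>i<?N. if good (cU U) i then wt i else 0)"
      by (intro sum_mono) (use pt in auto)
    finally show "success_prob m ms (net_state m U0 Us (QMQ m n (cU U))) decode S (cU U)
      \<le> (\<Sum>i<?N. if good (cU U) i then wt i else 0)" .
  qed
  also have "\<dots> = (\<Sum>i<?N. \<Sum>U\<in>Pow S. if good (cU U) i then wt i else 0)" by (rule sum.swap)
  also have "\<dots> = (\<Sum>i<?N. real (card {U \<in> Pow S. good (cU U) i}) * wt i)"
    using finS by (intro sum.cong refl) (simp add: sum_if_const)
  also have "\<dots> \<le> (\<Sum>i<?N. real K * wt i)"
    by (intro sum_mono mult_right_mono) (use cnt wt0 in auto)
  also have "\<dots> = real K * real (card B)"
    using orthon_weights[OF B(3)] by (simp add: sum_distrib_left[symmetric] wt_def)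
  also have "\<dots> \<le> real K * (2^n*2)^T"
  proof -
    have "card B \<le> (2^n*2)^T" by (rule le_trans[OF B(2) Wp(2)])
    then have "real (card B) \<le> real ((2^n*2)^T)" by (simp only: of_nat_le_iff)
    also have "real ((2^n*2)^T) = (2^n*2::real)^T" by simp
    finally have "real (card B) \<le> (2^n*2)^T" .
    then show ?thesis by (intro mult_left_mono) auto
  qed
  finally have A: "2^d * (2/3) \<le> real K * (2^n*2)^T" by simp
  show False
    by (rule final_arith[OF lt n1 d1 A])
       (use K_bound[OF finS S_card] K_small[OF finS S_card] in \<open>auto simp: K_def\<close>)
qed

end
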